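(* Let $G$ be a group of order $k$. The ideal $I(G,* )$ of graded $*$-identities of $M_k(\mathbb{C})$ with the $G$-crossed-product grading and the transpose involution is generated as a $(T,* )$-ideal by the elements (1) $x_{i,e}x_{j,e}-x_{j,e}x_{i,e}$ for all $i,j\ge1$, and (2) $x_{i,e}-x_{i,e}^*$ for all $i\ge1$.
   Context: Let $G=\{g_1=e,\dots,g_k\}$ be a finite group of order $k$. Index rows/columns of $k\times k$ matrices by $G$, let $E_{a,b}$ be the matrix units, $P_g=\sum_{h\in G}E_{h,hg}$, and let $M_k(\mathbb{C})_g=\{DP_g: D\text{ diagonal}\}$ (the $G$-crossed-product grading); the involution $*$ is the transpose. $F=\mathbb{Q}\{x_{i,g},x^*_{i,g}: i\ge1,g\in G\}$ is the free associative algebra with involution $*$ (the anti-automorphism exchanging $x_{i,g}$ and $x^*_{i,g}$) and grading $\deg x_{i,g}=g$, $\deg x^*_{i,g}=g^{-1}$. $I(G,* )$ is the set of $f\in F$ vanishing under every substitution $x_{i,g}\mapsto A_{i,g}\in M_k(\mathbb{C})_g$, $x^*_{i,g}\mapsto A_{i,g}^T$. A $(T,* )$-ideal is an ideal of $F$ stable under $*$ and under every algebra endomorphism $\varphi$ of $F$ with $\varphi(x_{i,g})$ homogeneous of degree $g$ and $\varphi(x^*_{i,g})=\varphi(x_{i,g})^*$; the $(T,* )$-ideal generated by a set is the smallest $(T,* )$-ideal containing it. *)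

theory Defs
  imports Complex_Main
begin

text \<open>The group G is a finite type of class group_add (written additively:
  e = 0, gh = g + h, g^{-1} = - g).\<close>

datatype 'g letter = X nat 'g | Xs nat 'g

fun idx :: "'g letter \<Rightarrow> nat" where
  "idx (X i g) = i" | "idx (Xs i g) = i"

fun letter_star :: "'g letter \<Rightarrow> 'g letter" where
  "letter_star (X i g) = Xs i g" | "letter_star (Xs i g) = X i g"

fun ldeg :: "'g letter \<Rightarrow> 'g::group_add" where
  "ldeg (X i g) = g" | "ldeg (Xs i g) = - g"

definition wdeg :: "'g letter list \<Rightarrow> 'g::group_add" where
  "wdeg w = sum_list (map ldeg w)"

type_synonym 'g fa = "'g letter list \<Rightarrow> rat"

definition supp :: "'g fa \<Rightarrow> 'g letter list set" where
  "supp p = {w. p w \<noteq> 0}"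

definition FA :: "'g fa set" where
  "FA = {p. finite (supp p) \<and> (\<forall>w\<in>supp p. \<forall>l\<in>set w. 1 \<le> idx l)}"

definition fa_zero :: "'g fa" where "fa_zero = (\<lambda>w. 0)"
definition fa_one :: "'g fa" where "fa_one = (\<lambda>w. if w = [] then 1 else 0)"
definition fa_var :: "'g letter \<Rightarrow> 'g fa" where
  "fa_var l = (\<lambda>w. if w = [l] then 1 else 0)"
definition fa_add :: "'g fa \<Rightarrow> 'g fa \<Rightarrow> 'g fa" where
  "fa_add p q = (\<lambda>w. p w + q w)"
definition fa_diff :: "'g fa \<Rightarrow> 'g fa \<Rightarrow> 'g fa" where
  "fa_diff p q = (\<lambda>w. p w - q w)"
definition fa_smult :: "rat \<Rightarrow> 'g fa \<Rightarrow> 'g fa" where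
  "fa_smult c p = (\<lambda>w. c * p w)"
definition fa_mult :: "'g fa \<Rightarrow> 'g fa \<Rightarrow> 'g fa" where
  "fa_mult p q = (\<lambda>w. \<Sum>i\<in>{0..length w}. p (take i w) * q (drop i w))"

text \<open>The involution: the anti-automorphism exchanging x_{i,g} and x*_{i,g}.\<close>
definition fa_star :: "'g fa \<Rightarrow> 'g fa" where
  "fa_star p = (\<lambda>w. p (rev (map letter_star w)))"

definition homogeneous :: "'g::group_add \<Rightarrow> 'g fa \<Rightarrow> bool" where
  "homogeneous g p \<longleftrightarrow> (\<forall>w\<in>supp p. wdeg w = g)"

text \<open>The algebra endomorphism with x_{i,g} \<mapsto> h i g and x*_{i,g} \<mapsto> (h i g)*.\<close>
fun limg :: "(nat \<Rightarrow> 'g \<Rightarrow> 'g fa) \<Rightarrow> 'g letter \<Rightarrow> 'g fa" where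
  "limg h (X i g) = h i g" | "limg h (Xs i g) = fa_star (h i g)"

definition wimg :: "(nat \<Rightarrow> 'g \<Rightarrow> 'g fa) \<Rightarrow> 'g letter list \<Rightarrow> 'g fa" where
  "wimg h w = foldr fa_mult (map (limg h) w) fa_one"

definition subst :: "(nat \<Rightarrow> 'g \<Rightarrow> 'g fa) \<Rightarrow> 'g fa \<Rightarrow> 'g fa" where
  "subst h p = (\<lambda>u. \<Sum>w\<in>supp p. p w * wimg h w u)"

definition tstar_ideal :: "('g::group_add) fa set \<Rightarrow> bool" where
  "tstar_ideal J \<longleftrightarrow>
     J \<subseteq> FA \<and> fa_zero \<in> J \<and>
     (\<forall>a\<in>J. \<forall>b\<in>J. fa_add a b \<in> J) \<and>
     (\<forall>a\<in>J. \<forall>c. fa_smult c a \<in> J) \<and>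
     (\<forall>a\<in>J. \<forall>p\<in>FA. fa_mult p a \<in> J \<and> fa_mult a p \<in> J) \<and>
     (\<forall>a\<in>J. fa_star a \<in> J) \<and>
     (\<forall>h. (\<forall>i g. 1 \<le> i \<longrightarrow> h i g \<in> FA \<and> homogeneous g (h i g)) \<longrightarrow>
          (\<forall>a\<in>J. subst h a \<in> J))"

definition tstar_gen :: "('g::group_add) fa set \<Rightarrow> 'g fa set" where
  "tstar_gen S = \<Inter>{J. tstar_ideal J \<and> S \<subseteq> J}"

section \<open>M_k(C) indexed by G, with the crossed-product grading\<close>

type_synonym 'g cmat = "'g \<Rightarrow> 'g \<Rightarrow> complex"

definition mmult :: "('g::finite) cmat \<Rightarrow> 'g cmat \<Rightarrow> 'g cmat" where
  "mmult A B = (\<lambda>a c. \<Sum>b\<in>UNIV. A a b * B b c)"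
definition mone :: "'g cmat" where "mone = (\<lambda>a c. if a = c then 1 else 0)"
definition mzero :: "'g cmat" where "mzero = (\<lambda>a c. 0)"
definition mtrans :: "'g cmat \<Rightarrow> 'g cmat" where "mtrans A = (\<lambda>a c. A c a)"
definition mdiag :: "('g \<Rightarrow> complex) \<Rightarrow> 'g cmat" where
  "mdiag d = (\<lambda>a c. if a = c then d a else 0)"

text \<open>P_g = sum_h E_{h,hg}.\<close>
definition Pmat :: "'g::group_add \<Rightarrow> 'g cmat" where
  "Pmat g = (\<lambda>a c. if c = a + g then 1 else 0)"

definition graded_comp :: "'g::{group_add,finite} \<Rightarrow> 'g cmat set" where
  "graded_comp g = {mmult (mdiag d) (Pmat g) | d. True}"

fun meval :: "(nat \<Rightarrow> 'g \<Rightarrow> 'g cmat) \<Rightarrow> 'g letter \<Rightarrow> 'g cmat" where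
  "meval A (X i g) = A i g" | "meval A (Xs i g) = mtrans (A i g)"

definition weval :: "(nat \<Rightarrow> 'g \<Rightarrow> ('g::finite) cmat) \<Rightarrow> 'g letter list \<Rightarrow> 'g cmat" where
  "weval A w = foldr mmult (map (meval A) w) mone"

definition feval :: "(nat \<Rightarrow> 'g \<Rightarrow> ('g::finite) cmat) \<Rightarrow> 'g fa \<Rightarrow> 'g cmat" where
  "feval A p = (\<lambda>a c. \<Sum>w\<in>supp p. of_rat (p w) * weval A w a c)"

definition star_identities :: "('g::{group_add,finite}) fa set" where
  "star_identities = {f \<in> FA. \<forall>A. (\<forall>i g. A i g \<in> graded_comp g) \<longrightarrow> feval A f = mzero}"

definition star_gens :: "('g::group_add) fa set" where
  "star_gens =
     {fa_diff (fa_mult (fa_var (X i 0)) (fa_var (X j 0))) (fa_mult (fa_var (X j 0)) (fa_var (X i 0)))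
       | i j. 1 \<le> i \<and> 1 \<le> j}
   \<union> {fa_diff (fa_var (X i 0)) (fa_var (Xs i 0)) | i. 1 \<le> i}"

end

theory Submission
  imports Defs "HOL-Library.Multiset" "HOL-Library.Countable_Set" "HOL-Computational_Algebra.Polynomial" "HOL-Computational_Algebra.Primes" "HOL-Library.Infinite_Set"
begin

definition wstar :: "'g letter list \<Rightarrow> 'g letter list" where
  "wstar w = rev (map letter_star w)"

fun ledge :: "'g::group_add \<Rightarrow> 'g letter \<Rightarrow> nat \<times> 'g \<times> 'g" where
  "ledge s (X i h) = (i,h,s)" | "ledge s (Xs i h) = (i,h,s - h)"

fun em :: "'g::group_add \<Rightarrow> 'g letter list \<Rightarrow> (nat\<times>'g\<times>'g) multiset" where
  "em s [] = {#}" | "em s (l#w) = add_mset (ledge s l) (em (s + ldeg l) w)"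

fun vis :: "'g::group_add \<Rightarrow> 'g letter list \<Rightarrow> 'g set" where
  "vis s [] = {s}" | "vis s (l#w) = insert s (vis (s + ldeg l) w)"

definition ok :: "'g letter list \<Rightarrow> bool" where
  "ok w \<longleftrightarrow> (\<forall>l\<in>set w. 1 \<le> idx l)"

lemma wdeg_Nil[simp]: "wdeg [] = 0" by (simp add: wdeg_def)
lemma wdeg_Cons[simp]: "wdeg (l#w) = ldeg l + wdeg w" by (simp add: wdeg_def)
lemma wdeg_append[simp]: "wdeg (x@y) = wdeg x + wdeg y"
  by (induction x) (auto simp: add.assoc)

lemma star_star[simp]: "letter_star (letter_star l) = l" by (cases l) auto
lemma ldeg_star[simp]: "ldeg (letter_star l) = - ldeg l" by (cases l) auto
lemma idx_star[simp]: "idx (letter_star l) = idx l" by (cases l) auto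

lemma wstar_Nil[simp]: "wstar [] = []" by (simp add: wstar_def)
lemma wstar_Cons[simp]: "wstar (l#w) = wstar w @ [letter_star l]" by (simp add: wstar_def)
lemma wstar_append[simp]: "wstar (x@y) = wstar y @ wstar x" by (simp add: wstar_def)
lemma wstar_wstar[simp]: "wstar (wstar w) = w" by (simp add: wstar_def rev_map comp_def)
lemma wdeg_wstar[simp]: "wdeg (wstar w) = - wdeg w"
  by (induction w) (auto simp: minus_add)

lemma ok_Nil[simp]: "ok []" by (simp add: ok_def)
lemma ok_Cons[simp]: "ok (l#w) \<longleftrightarrow> 1 \<le> idx l \<and> ok w" by (simp add: ok_def)
lemma ok_append[simp]: "ok (x@y) \<longleftrightarrow> ok x \<and> ok y" by (auto simp: ok_def)
lemma ok_wstar[simp]: "ok (wstar w) \<longleftrightarrow> ok w" by (auto simp: ok_def wstar_def)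

lemma em_append: "em s (x@y) = em s x + em (s + wdeg x) y"
  by (induction x arbitrary: s) (auto simp: add.assoc)

lemma ledge_star: "ledge (s + ldeg l) (letter_star l) = ledge s l"
  by (cases l) (auto simp: add.assoc)

lemma em_wstar_gen: "em (s + wdeg w) (wstar w) = em s w"
proof (induction w arbitrary: s)
  case Nil then show ?case by simp
next
  case (Cons l w)
  have "em (s + wdeg (l#w)) (wstar (l#w)) =
        em (s + ldeg l + wdeg w) (wstar w) + em (s + ldeg l + wdeg w + - wdeg w) [letter_star l]"
    by (simp add: em_append add.assoc)
  also have "\<dots> = em (s + ldeg l) w + {#ledge s l#}"
    using Cons.IH[of "s + ldeg l"] ledge_star[of s l]
    by (simp add: add.assoc[symmetric])
  finally show ?case by simp
qed

lemma em_wstar: "wdeg w = 0 \<Longrightarrow> em s (wstar w) = em s w"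
  using em_wstar_gen[of s w] by simp

lemma size_em[simp]: "size (em s w) = length w"
  by (induction w arbitrary: s) auto

lemma em_Nil_iff[simp]: "em s w = {#} \<longleftrightarrow> w = []"
  by (cases w) auto

lemma ok_em: "ok w \<longleftrightarrow> (\<forall>x\<in>#em s w. 1 \<le> fst x)"
proof (induction w arbitrary: s)
  case (Cons l w) then show ?case by (cases l) auto
qed simp

lemma start_vis[simp]: "s \<in> vis s w" by (cases w) auto

lemma vis_append: "vis s (x@y) = vis s x \<union> vis (s + wdeg x) y"
  by (induction x arbitrary: s) (auto simp: add.assoc)

lemma end_vis: "s + wdeg w \<in> vis s w"
proof (induction w arbitrary: s)
  case (Cons l w) then show ?case using Cons.IH[of "s + ldeg l"] by (simp add: add.assoc)
qed simp

lemma vis_iff: "a \<in> vis s w \<longleftrightarrow> (\<exists>x y. w = x@y \<and> s + wdeg x = a)"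
proof (induction w arbitrary: s)
  case Nil then show ?case by auto
next
  case (Cons l w)
  show ?case
  proof
    assume "a \<in> vis s (l#w)"
    then consider "a = s" | "a \<in> vis (s + ldeg l) w" by auto
    then show "\<exists>x y. l#w = x@y \<and> s + wdeg x = a"
    proof cases
      case 1 then show ?thesis by (intro exI[of _ "[]"] exI[of _ "l#w"]) auto
    next
      case 2
      then obtain x y where "w = x@y" "s + ldeg l + wdeg x = a" using Cons.IH by blast
      then show ?thesis by (intro exI[of _ "l#x"] exI[of _ y]) (auto simp: add.assoc)
    qed
  next
    assume "\<exists>x y. l#w = x@y \<and> s + wdeg x = a"
    then obtain x y where xy: "l#w = x@y" "s + wdeg x = a" by blast
    show "a \<in> vis s (l#w)"
    proof (cases x)
      case Nil then show ?thesis using xy by auto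
    next
      case (Cons l' x')
      then have "w = x'@y" "l' = l" using xy by auto
      then have "a \<in> vis (s + ldeg l) w" using Cons.IH xy Cons by (auto simp: add.assoc)
      then show ?thesis by simp
    qed
  qed
qed

lemma ledge_step: "ledge s l = (i,h,t) \<Longrightarrow>
   (s = t \<and> s + ldeg l = t + h) \<or> (s = t + h \<and> s + ldeg l = t)"
  by (cases l) (auto simp: add.assoc)

lemma em_endpoints: "(i,h,t) \<in># em s w \<Longrightarrow> t \<in> vis s w \<and> t + h \<in> vis s w"
proof (induction w arbitrary: s)
  case Nil then show ?case by simp
next
  case (Cons l w)
  show ?case
  proof (cases "ledge s l = (i,h,t)")
    case True
    from ledge_step[OF True] show ?thesis
      using start_vis[of "s + ldeg l" w] by auto
  next
    case False
    then have "(i,h,t) \<in># em (s + ldeg l) w" using Cons.prems by auto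
    then show ?thesis using Cons.IH by auto
  qed
qed

lemma ledge_eq: assumes that: "ledge s' l' = ledge a l" shows "
(l' = l \<and> s' = a) \<or> (l' = letter_star l \<and> s' = a + ldeg l)"
proof (cases l)
  case (X i h) then show ?thesis using that by (cases l') (auto simp: diff_eq_eq)
next
  case (Xs i h) then show ?thesis using that by (cases l') (auto simp: diff_eq_eq)
qed

lemma em_mem_split: "e \<in># em a v \<Longrightarrow> \<exists>p l q. v = p @ l # q \<and> ledge (a + wdeg p) l = e"
proof (induction v arbitrary: a)
  case Nil then show ?case by simp
next
  case (Cons l v)
  show ?case
  proof (cases "ledge a l = e")
    case True then show ?thesis by (intro exI[of _ "[]"]) auto
  next
    case False
    then have "e \<in># em (a + ldeg l) v" using Cons.prems by auto
    then obtain p l' q where "v = p @ l' # q" "ledge (a + ldeg l + wdeg p) l' = e"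
      using Cons.IH by blast
    then show ?thesis by (intro exI[of _ "l#p"]) (auto simp: add.assoc)
  qed
qed


lemma add_self_eq_iff[simp]: "(a::'a::group_add) + x = a \<longleftrightarrow> x = 0"
  by (metis add.right_neutral add_left_cancel)

lemma trap:
  assumes E1: "\<And>i h t. (i,h,t) \<in> E1 \<Longrightarrow> t \<in> S \<and> t + h \<in> S"
    and E2: "\<And>i h t. (i,h,t) \<in> E2 \<Longrightarrow> t \<in> V2 \<and> t + h \<in> V2"
    and SV: "S \<inter> V2 \<subseteq> {a}"
  shows "s \<in> S \<Longrightarrow> s \<noteq> a \<Longrightarrow> a \<notin> vis s w \<Longrightarrow> set_mset (em s w) \<subseteq> E1 \<union> E2
     \<Longrightarrow> s + wdeg w \<in> S"
proof (induction w arbitrary: s)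
  case Nil then show ?case by simp
next
  case (Cons l w)
  obtain i h t where e: "ledge s l = (i,h,t)" by (metis prod_cases3)
  have st: "(s = t \<and> s + ldeg l = t + h) \<or> (s = t + h \<and> s + ldeg l = t)"
    using ledge_step[OF e] .
  have "(i,h,t) \<in> E1 \<union> E2" using Cons.prems(4) e by auto
  moreover have "(i,h,t) \<notin> E2"
  proof
    assume "(i,h,t) \<in> E2"
    then have "s \<in> V2" using E2 st by auto
    then show False using SV Cons.prems(1,2) by auto
  qed
  ultimately have "(i,h,t) \<in> E1" by auto
  then have n: "s + ldeg l \<in> S" using E1 st by auto
  have na: "s + ldeg l \<noteq> a" using Cons.prems(3) start_vis[of "s + ldeg l" w] by auto
  have "s + ldeg l + wdeg w \<in> S"
    using Cons.IH[OF n na] Cons.prems(3,4) by auto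
  then show ?case by (simp add: add.assoc)
qed

lemma em_endpoints': "(i,h,t) \<in> set_mset (em s w) \<Longrightarrow> t \<in> vis s w \<and> t + h \<in> vis s w"
  by (fact em_endpoints)

locale walkrel =
  fixes rel :: "'g::group_add letter list \<Rightarrow> 'g letter list \<Rightarrow> bool"
  assumes rrefl: "ok u \<Longrightarrow> rel u u"
    and rsym: "rel u v \<Longrightarrow> rel v u"
    and rtrans: "rel u v \<Longrightarrow> rel v w \<Longrightarrow> rel u w"
    and rcong: "rel u v \<Longrightarrow> ok x \<Longrightarrow> ok y \<Longrightarrow> rel (x@u@y) (x@v@y)"
    and rswap: "ok b \<Longrightarrow> ok c \<Longrightarrow> wdeg b = 0 \<Longrightarrow> wdeg c = 0 \<Longrightarrow> rel (b@c) (c@b)"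
    and rrev: "ok b \<Longrightarrow> wdeg b = 0 \<Longrightarrow> rel b (wstar b)"
begin

lemma rev_ctx:
  assumes "ok x" "ok b" "ok y" "wdeg b = 0"
  shows "rel (x@b@y) (x@wstar b@y) \<and> em a (x@b@y) = em a (x@wstar b@y)
     \<and> wdeg (x@b@y) = wdeg (x@wstar b@y)"
  using rcong[OF rrev[OF assms(2,4)] assms(1,3)] assms(4) em_wstar[OF assms(4)]
  by (simp add: em_append)

lemma swap_ctx:
  assumes "ok x" "ok b" "ok c" "ok y" "wdeg b = 0" "wdeg c = 0"
  shows "rel (x@b@c@y) (x@c@b@y) \<and> em a (x@b@c@y) = em a (x@c@b@y)
     \<and> wdeg (x@b@c@y) = wdeg (x@c@b@y)"
  using rcong[OF rswap[OF assms(2,3,5,6)] assms(1,4)] assms(5,6)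
  by (simp add: em_append add_ac)

lemma front:
  assumes okv: "ok v" and mem: "ledge a l \<in># em a v"
  shows "(\<exists>v'. rel v (l#v') \<and> em a (l#v') = em a v \<and> wdeg (l#v') = wdeg v)
     \<or> (\<exists>p q. v = p@l#q \<and> p \<noteq> [] \<and> wdeg p = 0 \<and> a \<notin> vis (a + ldeg l) q
           \<and> vis a p \<inter> vis a (l#q) \<subseteq> {a})"
proof -
  obtain p l2 q where v: "v = p @ l2 # q" and e: "ledge (a + wdeg p) l2 = ledge a l"
    using em_mem_split[OF mem] by blast
  have okp: "ok p" and okq: "ok q" and okl2: "1 \<le> idx l2" using okv v by auto
  from ledge_eq[OF e] have "(l2 = l \<and> wdeg p = 0) \<or> (l2 = letter_star l \<and> wdeg p = ldeg l)"
    by auto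
  then consider "l2 = l" "wdeg p = 0" | "l2 = letter_star l" "wdeg p = ldeg l"
    by blast
  then show ?thesis
  proof cases
    case 2
    define c where "c = p @ [letter_star l]"
    have okc: "ok c" using okp okl2 2 by (simp add: c_def)
    have wc: "wdeg c = 0" using 2 by (simp add: c_def)
    have "v = [] @ c @ q" using v 2 by (simp add: c_def)
    moreover have "wstar c = l # wstar p" by (simp add: c_def)
    ultimately have "rel v (l # (wstar p @ q)) \<and> em a v = em a (l # (wstar p @ q))
        \<and> wdeg v = wdeg (l # (wstar p @ q))"
      using rev_ctx[OF _ okc okq wc, where x="[]" and a=a] by simp
    then show ?thesis by metis
  next
    case 1
    note A = 1
    show ?thesis
    proof (cases "p = []")
      case True
      then show ?thesis using v A rrefl[OF okv] by auto
    next
      case pne: False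
      show ?thesis
      proof (cases "a \<in> vis (a + ldeg l) q")
        case True
        then obtain q1 q2 where q: "q = q1@q2" and aq: "a + ldeg l + wdeg q1 = a"
          using vis_iff by blast
        have w1: "wdeg (l#q1) = 0" using aq by (simp add: add.assoc)
        have ok1: "ok (l#q1)" using okl2 okq q A by simp
        have okq2: "ok q2" using okq q by simp
        have "v = [] @ p @ (l#q1) @ q2" using v q A by simp
        then have "rel v (l # (q1 @ p @ q2)) \<and> em a v = em a (l # (q1 @ p @ q2))
           \<and> wdeg v = wdeg (l # (q1 @ p @ q2))"
          using swap_ctx[OF _ okp ok1 okq2 A(2) w1, where x="[]" and a=a] by simp
        then show ?thesis by metis
      next
        case nq: False
        show ?thesis
        proof (cases "vis a p \<inter> vis a (l#q) \<subseteq> {a}")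
          case True
          then show ?thesis using v A pne nq by blast
        next
          case False
          then obtain y where yp: "y \<in> vis a p" and yq: "y \<in> vis a (l#q)" and ya: "y \<noteq> a"
            by blast
          obtain p1 p2 where p: "p = p1@p2" and ap1: "a + wdeg p1 = y"
            using yp vis_iff by blast
          obtain r1 r2 where r: "l#q = r1@r2" and ar1: "a + wdeg r1 = y"
            using yq vis_iff by blast
          have "r1 \<noteq> []" using ar1 ya by auto
          then obtain r1' where r1: "r1 = l # r1'" using r by (cases r1) auto
          have w11: "wdeg p1 = wdeg r1" using ap1 ar1 add_left_cancel by metis
          have w12: "wdeg p1 + wdeg p2 = 0" using A p by simp
          have "- wdeg p1 = wdeg p2" using minus_unique[OF w12] .
          then have wpr: "wdeg (p2@r1) = 0" using w11 by (metis wdeg_append left_minus)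
          have wpr2: "wdeg (p1 @ wstar r1) = 0" using w11 by simp
          have okp1: "ok p1" and okp2: "ok p2" using okp p by auto
          have "ok (l#q)" using okl2 okq A by simp
          then have "ok (r1@r2)" using r by metis
          then have okr1: "ok r1" and okr2: "ok r2" by auto
          have v1: "v = p1 @ (p2@r1) @ r2" using v A p r by simp
          have s1: "rel v (p1 @ wstar (p2@r1) @ r2) \<and> em a v = em a (p1 @ wstar (p2@r1) @ r2)
                \<and> wdeg v = wdeg (p1 @ wstar (p2@r1) @ r2)"
            using rev_ctx[OF okp1 _ okr2 wpr, where a=a] okp2 okr1 v1 by simp
          have e2: "p1 @ wstar (p2@r1) @ r2 = [] @ (p1 @ wstar r1) @ (wstar p2 @ r2)" by simp
          have s2: "rel ([] @ (p1 @ wstar r1) @ (wstar p2 @ r2)) ([] @ wstar (p1 @ wstar r1) @ (wstar p2 @ r2))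
             \<and> em a ([] @ (p1 @ wstar r1) @ (wstar p2 @ r2)) = em a ([] @ wstar (p1 @ wstar r1) @ (wstar p2 @ r2))
             \<and> wdeg ([] @ (p1 @ wstar r1) @ (wstar p2 @ r2)) = wdeg ([] @ wstar (p1 @ wstar r1) @ (wstar p2 @ r2))"
            using rev_ctx[OF _ _ _ wpr2, where x="[]" and y="wstar p2 @ r2" and a=a] okp1 okr1 okp2 okr2 by simp
          have e3: "[] @ wstar (p1 @ wstar r1) @ (wstar p2 @ r2) = l # (r1' @ wstar p1 @ wstar p2 @ r2)"
            using r1 by simp
          show ?thesis using s1 s2 e2 e3 rtrans by metis
        qed
      qed
    qed
  qed
qed

theorem Kmain: "\<forall>(a::'g) u v. length u = n \<longrightarrow> ok u \<longrightarrow> ok v \<longrightarrow> em a u = em a v \<longrightarrow> wdeg u = wdeg v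
   \<longrightarrow> rel u v"
proof (induction n rule: less_induct)
  case (less n)
  show ?case
  proof (intro allI impI)
    fix a :: 'g and u v :: "'g letter list"
    assume len: "length u = n" and oku: "ok u" and okv: "ok v" and em: "em a u = em a v"
      and wd: "wdeg u = wdeg v"
    show "rel u v"
    proof (cases u)
      case Nil
      then have "v = []" using em by (metis em_Nil_iff)
      then show ?thesis using Nil rrefl by auto
    next
      case (Cons l u')
      have IH: "\<And>(a::'g) u v. length u < n \<Longrightarrow> ok u \<Longrightarrow> ok v \<Longrightarrow> em a u = em a v \<Longrightarrow> wdeg u = wdeg v
         \<Longrightarrow> rel u v" using less.IH by blast
      have mem: "ledge a l \<in># em a v" using em Cons by (metis em.simps(2) union_single_eq_member)
      from front[OF okv mem] show ?thesis
      proof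
        assume "\<exists>v'. rel v (l#v') \<and> em a (l#v') = em a v \<and> wdeg (l#v') = wdeg v"
        then obtain v' where r: "rel v (l#v')" and e: "em a (l#v') = em a v"
          and w: "wdeg (l#v') = wdeg v" by blast
        have e': "em (a + ldeg l) u' = em (a + ldeg l) v'" using e em Cons by (metis em.simps(2) add_mset_add_mset_same_iff)
        have w': "wdeg u' = wdeg v'" using w wd Cons by (metis add_left_cancel wdeg_Cons)
        have okv': "ok v'" using e okv ok_em by (metis ok_Cons)
        have "rel u' v'" using IH[OF _ _ okv' e' w'] len Cons oku by simp
        then have "rel ([l]@u'@[]) ([l]@v'@[])" using rcong oku Cons by (metis ok_Cons ok_Nil)
        then show ?thesis using Cons rsym[OF r] rtrans by auto
      next
        assume "\<exists>p q. v = p@l#q \<and> p \<noteq> [] \<and> wdeg p = 0 \<and> a \<notin> vis (a + ldeg l) q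
           \<and> vis a p \<inter> vis a (l#q) \<subseteq> {a}"
        then obtain p q where v: "v = p@l#q" and pne: "p \<noteq> []" and wp: "wdeg p = 0"
          and disj: "vis a p \<inter> vis a (l#q) \<subseteq> {a}" by blast
        obtain m p' where p: "p = m # p'" using pne by (cases p) auto
        have memu: "ledge a m \<in># em a u" using em v p by simp
        from front[OF oku memu] show ?thesis
        proof
          assume "\<exists>u''. rel u (m#u'') \<and> em a (m#u'') = em a u \<and> wdeg (m#u'') = wdeg u"
          then obtain u'' where r: "rel u (m#u'')" and e: "em a (m#u'') = em a u"
            and w: "wdeg (m#u'') = wdeg u" by blast
          have e': "em (a + ldeg m) u'' = em (a + ldeg m) (p'@l#q)" using e em v p by (metis append_Cons em.simps(2) add_mset_add_mset_same_iff)
          have w': "wdeg u'' = wdeg (p'@l#q)" using w wd v p by (metis add_left_cancel wdeg_Cons append_Cons)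
          have oku'': "ok u''" using e oku ok_em by (metis ok_Cons)
          have okr: "ok (p'@l#q)" using okv v p by simp
          have "length u'' < n" using len e by (metis size_em length_Cons lessI)
          then have "rel u'' (p'@l#q)" using IH[OF _ oku'' okr e' w'] by simp
          then have "rel ([m]@u''@[]) ([m]@(p'@l#q)@[])" using rcong okv v p by (metis ok_Cons ok_Nil ok_append)
          then show ?thesis using r v p rtrans by auto
        next
          assume "\<exists>p2 q2. u = p2@m#q2 \<and> p2 \<noteq> [] \<and> wdeg p2 = 0 \<and> a \<notin> vis (a + ldeg m) q2
           \<and> vis a p2 \<inter> vis a (m#q2) \<subseteq> {a}"
          then obtain p2 q2 where u: "u = p2@m#q2" and wp2: "wdeg p2 = 0"
            and na: "a \<notin> vis (a + ldeg m) q2" by blast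
          define c where "c = a + ldeg m"
          have cS: "c \<in> vis a p" using p by (simp add: c_def)
          have ca: "c \<noteq> a" using na start_vis[of c q2] by (auto simp: c_def)
          have emu: "em a u = em a p2 + add_mset (ledge a m) (em c q2)"
            using u wp2 by (simp add: em_append c_def)
          have emv: "em a v = em a p + em a (l#q)" using v wp by (simp add: em_append)
          have sub: "set_mset (em c q2) \<subseteq> set_mset (em a p) \<union> set_mset (em a (l#q))"
            using emu emv em by (metis Un_iff set_mset_union subsetI union_iff insert_DiffM2 
                  add_mset_add_single) 
          have endS: "c + wdeg q2 \<in> vis a p"
            using trap[of "set_mset (em a p)" "vis a p" "set_mset (em a (l#q))" "vis a (l#q)" a,
               OF em_endpoints' em_endpoints' disj cS ca] na sub by (simp add: c_def)
          have "a + wdeg u = c + wdeg q2" using u wp2 by (simp add: c_def add.assoc)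
          moreover have "a + wdeg v \<in> vis a (l#q)" using v wp end_vis[of a "l#q"] by simp
          ultimately have "c + wdeg q2 = a" using endS disj wd by auto
          then show ?thesis using end_vis[of c q2] na by (simp add: c_def)
        qed
      qed
    qed
  qed
qed

theorem K: "ok u \<Longrightarrow> ok v \<Longrightarrow> em a u = em a v \<Longrightarrow> wdeg u = wdeg v \<Longrightarrow> rel u v"
  using Kmain by blast

end

definition mon :: "'g letter list \<Rightarrow> 'g fa" where
  "mon w = (\<lambda>x. if x = w then 1 else 0)"

lemma supp_mon[simp]: "supp (mon w) = {w}" by (auto simp: supp_def mon_def)

lemma mon_FA: "ok w \<Longrightarrow> mon w \<in> FA" by (auto simp: FA_def ok_def)

lemma fa_one_mon: "fa_one = mon []" by (simp add: fa_one_def mon_def fun_eq_iff)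
lemma fa_var_mon: "fa_var l = mon [l]" by (simp add: fa_var_def mon_def fun_eq_iff)

lemma take_drop_eq: "i \<le> length x \<Longrightarrow> (take i x = u \<and> drop i x = v) \<longleftrightarrow> (i = length u \<and> x = u@v)"
proof
  assume i: "i \<le> length x" and h: "take i x = u \<and> drop i x = v"
  then have "x = u @ v" using append_take_drop_id[of i x] by simp
  moreover have "length u = i" using h i by auto
  ultimately show "i = length u \<and> x = u@v" by simp
next
  assume "i = length u \<and> x = u@v"
  then show "take i x = u \<and> drop i x = v" by simp
qed

lemma fa_mult_mon: "fa_mult (mon u) (mon v) = mon (u@v)"
proof
  fix x
  have "fa_mult (mon u) (mon v) x = (\<Sum>i\<in>{0..length x}. if i = length u \<and> x = u@v then 1 else 0)"
    unfolding fa_mult_def mon_def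
    by (rule sum.cong) (auto simp: take_drop_eq)
  also have "\<dots> = mon (u@v) x"
    by (cases "x = u@v") (auto simp: mon_def)
  finally show "fa_mult (mon u) (mon v) x = mon (u@v) x" .
qed

lemma rep_sum: "finite U \<Longrightarrow> supp p \<subseteq> U \<Longrightarrow> p = (\<lambda>x. \<Sum>u\<in>U. p u * mon u x)"
proof
  fix x assume U: "finite U" "supp p \<subseteq> U"
  have "(\<Sum>u\<in>U. p u * mon u x) = (\<Sum>u\<in>U. if u = x then p x else 0)"
    by (rule sum.cong) (auto simp: mon_def)
  also have "\<dots> = p x" using U by (auto simp: supp_def)
  finally show "p x = (\<Sum>u\<in>U. p u * mon u x)" by simp
qed

lemma fa_mult_sum_left: "fa_mult (\<lambda>x. \<Sum>j\<in>K. c j * f j x) q = (\<lambda>x. \<Sum>j\<in>K. c j * fa_mult (f j) q x)"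
proof
  fix x
  have "fa_mult (\<lambda>x. \<Sum>j\<in>K. c j * f j x) q x
      = (\<Sum>i\<in>{0..length x}. \<Sum>j\<in>K. c j * (f j (take i x) * q (drop i x)))"
    unfolding fa_mult_def by (simp add: sum_distrib_right mult.assoc)
  also have "\<dots> = (\<Sum>j\<in>K. \<Sum>i\<in>{0..length x}. c j * (f j (take i x) * q (drop i x)))"
    by (rule sum.swap)
  also have "\<dots> = (\<Sum>j\<in>K. c j * fa_mult (f j) q x)"
    unfolding fa_mult_def by (simp add: sum_distrib_left)
  finally show "fa_mult (\<lambda>x. \<Sum>j\<in>K. c j * f j x) q x = (\<Sum>j\<in>K. c j * fa_mult (f j) q x)" .
qed

lemma fa_mult_sum_right: "fa_mult p (\<lambda>x. \<Sum>j\<in>K. c j * f j x) = (\<lambda>x. \<Sum>j\<in>K. c j * fa_mult p (f j) x)"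
proof
  fix x
  have "fa_mult p (\<lambda>x. \<Sum>j\<in>K. c j * f j x) x
      = (\<Sum>i\<in>{0..length x}. \<Sum>j\<in>K. c j * (p (take i x) * f j (drop i x)))"
    unfolding fa_mult_def by (simp add: sum_distrib_left mult_ac)
  also have "\<dots> = (\<Sum>j\<in>K. \<Sum>i\<in>{0..length x}. c j * (p (take i x) * f j (drop i x)))"
    by (rule sum.swap)
  also have "\<dots> = (\<Sum>j\<in>K. c j * fa_mult p (f j) x)"
    unfolding fa_mult_def by (simp add: sum_distrib_left)
  finally show "fa_mult p (\<lambda>x. \<Sum>j\<in>K. c j * f j x) x = (\<Sum>j\<in>K. c j * fa_mult p (f j) x)" .
qed

lemma fa_mult_expand:
  assumes "finite U" "supp p \<subseteq> U" "finite V" "supp q \<subseteq> V"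
  shows "fa_mult p q = (\<lambda>x. \<Sum>u\<in>U. \<Sum>v\<in>V. p u * q v * mon (u@v) x)"
proof -
  have "fa_mult p q = fa_mult (\<lambda>x. \<Sum>u\<in>U. p u * mon u x) (\<lambda>x. \<Sum>v\<in>V. q v * mon v x)"
    using rep_sum[OF assms(1,2)] rep_sum[OF assms(3,4)] by metis
  also have "\<dots> = (\<lambda>x. \<Sum>u\<in>U. p u * (\<Sum>v\<in>V. q v * fa_mult (mon u) (mon v) x))"
    by (simp add: fa_mult_sum_left fa_mult_sum_right)
  also have "\<dots> = (\<lambda>x. \<Sum>u\<in>U. \<Sum>v\<in>V. p u * q v * mon (u@v) x)"
    by (simp add: fa_mult_mon sum_distrib_left mult_ac)
  finally show ?thesis .
qed

lemma FA_iff: "p \<in> FA \<longleftrightarrow> finite (supp p) \<and> (\<forall>w\<in>supp p. ok w)"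
  by (auto simp: FA_def ok_def)

lemma FA_subset: "finite U \<Longrightarrow> (\<forall>w\<in>U. ok w) \<Longrightarrow> supp p \<subseteq> U \<Longrightarrow> p \<in> FA"
  by (auto simp: FA_iff intro: finite_subset)

lemma supp_add: "supp (fa_add p q) \<subseteq> supp p \<union> supp q" by (auto simp: supp_def fa_add_def)
lemma supp_diff: "supp (fa_diff p q) \<subseteq> supp p \<union> supp q" by (auto simp: supp_def fa_diff_def)
lemma supp_smult: "supp (fa_smult c p) \<subseteq> supp p" by (auto simp: supp_def fa_smult_def)
lemma supp_zero[simp]: "supp fa_zero = {}" by (auto simp: supp_def fa_zero_def)

lemma fa_star_apply: "fa_star p w = p (wstar w)" by (simp add: fa_star_def wstar_def)
lemma supp_star: "supp (fa_star p) = wstar ` supp p"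
  by (auto simp: supp_def fa_star_apply image_iff) (metis wstar_wstar)

lemma supp_sum: "supp (\<lambda>x. \<Sum>j\<in>K. f j x) \<subseteq> (\<Union>j\<in>K. supp (f j))"
proof
  fix x assume "x \<in> supp (\<lambda>x. \<Sum>j\<in>K. f j x)"
  then have "(\<Sum>j\<in>K. f j x) \<noteq> 0" by (simp add: supp_def)
  then obtain j where "j \<in> K" "f j x \<noteq> 0" by (meson sum.neutral)
  then show "x \<in> (\<Union>j\<in>K. supp (f j))" by (auto simp: supp_def)
qed

lemma FA_sum: "finite K \<Longrightarrow> (\<And>j. j \<in> K \<Longrightarrow> f j \<in> FA) \<Longrightarrow> (\<lambda>x. \<Sum>j\<in>K. f j x) \<in> FA"
  by (rule FA_subset[OF _ _ supp_sum]) (auto simp: FA_iff)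

lemma supp_mult:
  assumes "finite (supp p)" "finite (supp q)"
  shows "supp (fa_mult p q) \<subseteq> (\<lambda>(u,v). u@v) ` (supp p \<times> supp q)"
proof
  fix x assume x: "x \<in> supp (fa_mult p q)"
  show "x \<in> (\<lambda>(u,v). u@v) ` (supp p \<times> supp q)"
  proof (rule ccontr)
    assume n: "x \<notin> (\<lambda>(u,v). u@v) ` (supp p \<times> supp q)"
    have "fa_mult p q x = (\<Sum>u\<in>supp p. \<Sum>v\<in>supp q. p u * q v * mon (u@v) x)"
      using fa_mult_expand[OF assms(1) subset_refl assms(2) subset_refl] by metis
    also have "\<dots> = 0"
      by (rule sum.neutral, rule ballI, rule sum.neutral) (use n in \<open>auto simp: mon_def\<close>)
    finally show False using x by (simp add: supp_def)
  qed
qed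

lemma FA_add: "p \<in> FA \<Longrightarrow> q \<in> FA \<Longrightarrow> fa_add p q \<in> FA"
  by (rule FA_subset[OF _ _ supp_add]) (auto simp: FA_iff)
lemma FA_diff: "p \<in> FA \<Longrightarrow> q \<in> FA \<Longrightarrow> fa_diff p q \<in> FA"
  by (rule FA_subset[OF _ _ supp_diff]) (auto simp: FA_iff)
lemma FA_smult: "p \<in> FA \<Longrightarrow> fa_smult c p \<in> FA"
  by (rule FA_subset[OF _ _ supp_smult]) (auto simp: FA_iff)
lemma FA_zero: "fa_zero \<in> FA" by (simp add: FA_iff)
lemma FA_one: "fa_one \<in> FA" by (simp add: fa_one_mon mon_FA)
lemma FA_star: "p \<in> FA \<Longrightarrow> fa_star p \<in> FA"
  by (auto simp: FA_iff supp_star)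
lemma FA_mult: "p \<in> FA \<Longrightarrow> q \<in> FA \<Longrightarrow> fa_mult p q \<in> FA"
  apply (rule FA_subset[OF _ _ supp_mult])
  apply (auto simp: FA_iff)
  done


lemma wimg_Nil[simp]: "wimg h [] = fa_one" by (simp add: wimg_def)
lemma wimg_Cons[simp]: "wimg h (l#w) = fa_mult (limg h l) (wimg h w)" by (simp add: wimg_def)

definition hok :: "(nat \<Rightarrow> 'g \<Rightarrow> 'g fa) \<Rightarrow> bool" where
  "hok h \<longleftrightarrow> (\<forall>i g. 1 \<le> i \<longrightarrow> h i g \<in> FA)"

lemma limg_FA: "hok h \<Longrightarrow> 1 \<le> idx l \<Longrightarrow> limg h l \<in> FA"
  by (cases l) (auto simp: hok_def FA_star)

lemma wimg_FA: "hok h \<Longrightarrow> ok w \<Longrightarrow> wimg h w \<in> FA"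
  by (induction w) (auto simp: FA_one FA_mult limg_FA)

lemma subst_FA: "hok h \<Longrightarrow> p \<in> FA \<Longrightarrow> subst h p \<in> FA"
  unfolding subst_def
proof (rule FA_sum)
  fix w assume "hok h" "p \<in> FA" "w \<in> supp p"
  then have "wimg h w \<in> FA" using wimg_FA by (auto simp: FA_iff)
  then show "(\<lambda>x. p w * wimg h w x) \<in> FA" using FA_smult[of "wimg h w" "p w"] by (simp add: fa_smult_def)
qed (auto simp: FA_iff)

lemma mmult_assoc: "mmult (mmult A B) C = mmult A (mmult B C)"
proof (intro ext)
  fix a c
  have "mmult (mmult A B) C a c = (\<Sum>d\<in>UNIV. \<Sum>b\<in>UNIV. A a b * B b d * C d c)"
    by (simp add: mmult_def sum_distrib_right)
  also have "\<dots> = (\<Sum>b\<in>UNIV. \<Sum>d\<in>UNIV. A a b * B b d * C d c)" by (rule sum.swap)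
  also have "\<dots> = mmult A (mmult B C) a c"
    by (simp add: mmult_def sum_distrib_left mult.assoc)
  finally show "mmult (mmult A B) C a c = mmult A (mmult B C) a c" .
qed

lemma mmult_mone_left[simp]: "mmult mone A = A"
proof (intro ext)
  fix x y
  have "mmult mone A x y = (\<Sum>b\<in>UNIV. if b = x then A b y else 0)"
    unfolding mmult_def mone_def by (rule sum.cong) auto
  then show "mmult mone A x y = A x y" by simp
qed
lemma mmult_mone_right[simp]: "mmult A mone = A"
proof (intro ext)
  fix x y
  have "mmult A mone x y = (\<Sum>b\<in>UNIV. if b = y then A x b else 0)"
    unfolding mmult_def mone_def by (rule sum.cong) auto
  then show "mmult A mone x y = A x y" by simp
qed
lemma mmult_mzero_right[simp]: "mmult A mzero = mzero"
  by (simp add: mmult_def mzero_def fun_eq_iff)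
lemma mtrans_mtrans[simp]: "mtrans (mtrans A) = A" by (simp add: mtrans_def)
lemma mtrans_mmult: "mtrans (mmult A B) = mmult (mtrans B) (mtrans A)"
  by (simp add: mtrans_def mmult_def fun_eq_iff mult.commute)
lemma mtrans_mone[simp]: "mtrans mone = mone" by (auto simp: mtrans_def mone_def fun_eq_iff)
lemma mtrans_mzero[simp]: "mtrans mzero = mzero" by (auto simp: mtrans_def mzero_def fun_eq_iff)

lemma weval_Nil[simp]: "weval A [] = mone" by (simp add: weval_def)
lemma weval_Cons[simp]: "weval A (l#w) = mmult (meval A l) (weval A w)" by (simp add: weval_def)
lemma weval_append: "weval A (u@v) = mmult (weval A u) (weval A v)"
  by (induction u) (auto simp: mmult_assoc)

lemma meval_star: "meval A (letter_star l) = mtrans (meval A l)"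
  by (cases l) auto

lemma weval_wstar: "weval A (wstar w) = mtrans (weval A w)"
  by (induction w) (auto simp: weval_append meval_star mtrans_mmult)

lemma feval_eq: "finite T \<Longrightarrow> supp p \<subseteq> T \<Longrightarrow>
   feval A p a c = (\<Sum>w\<in>T. of_rat (p w) * weval A w a c)"
  unfolding feval_def
  by (rule sum.mono_neutral_left) (auto simp: supp_def)

lemma feval_mon[simp]: "feval A (mon w) = weval A w"
  unfolding feval_def supp_mon by (simp add: mon_def)

lemma feval_sum:
  assumes K: "finite K" and f: "\<And>j. j \<in> K \<Longrightarrow> finite (supp (f j))"
  shows "feval A (\<lambda>x. \<Sum>j\<in>K. c j * f j x) a b = (\<Sum>j\<in>K. of_rat (c j) * feval A (f j) a b)"
proof -
  define T where "T = (\<Union>j\<in>K. supp (f j))"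
  have T: "finite T" using K f by (simp add: T_def)
  have "feval A (\<lambda>x. \<Sum>j\<in>K. c j * f j x) a b = (\<Sum>w\<in>T. of_rat (\<Sum>j\<in>K. c j * f j w) * weval A w a b)"
  proof -
    have "supp (\<lambda>x. \<Sum>j\<in>K. c j * f j x) \<subseteq> T"
      using supp_sum[of "\<lambda>j x. c j * f j x" K] by (auto simp: T_def supp_def)
    then show ?thesis using feval_eq[OF T] by blast
  qed
  also have "\<dots> = (\<Sum>w\<in>T. \<Sum>j\<in>K. of_rat (c j) * (of_rat (f j w) * weval A w a b))"
    by (simp add: of_rat_sum of_rat_mult sum_distrib_right mult.assoc)
  also have "\<dots> = (\<Sum>j\<in>K. \<Sum>w\<in>T. of_rat (c j) * (of_rat (f j w) * weval A w a b))"
    by (rule sum.swap)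
  also have "\<dots> = (\<Sum>j\<in>K. of_rat (c j) * feval A (f j) a b)"
  proof (rule sum.cong[OF refl])
    fix j assume j: "j \<in> K"
    have "supp (f j) \<subseteq> T" using j by (auto simp: T_def)
    then show "(\<Sum>w\<in>T. of_rat (c j) * (of_rat (f j w) * weval A w a b)) = of_rat (c j) * feval A (f j) a b"
      using feval_eq[OF T] by (simp add: sum_distrib_left)
  qed
  finally show ?thesis .
qed

lemma feval_mult:
  assumes U: "finite (supp p)" and V: "finite (supp q)"
  shows "feval A (fa_mult p q) = mmult (feval A p) (feval A q)"
proof (intro ext)
  fix a c
  let ?U = "supp p" and ?V = "supp q"
  have e: "fa_mult p q = (\<lambda>x. \<Sum>uv\<in>?U \<times> ?V. (p (fst uv) * q (snd uv)) * mon (fst uv @ snd uv) x)"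
    using fa_mult_expand[OF U subset_refl V subset_refl] by (simp add: sum.cartesian_product case_prod_beta)
  have "feval A (fa_mult p q) a c
      = (\<Sum>uv\<in>?U \<times> ?V. of_rat (p (fst uv) * q (snd uv)) * weval A (fst uv @ snd uv) a c)"
    by (subst e, subst feval_sum) (use U V in auto)
  also have "\<dots> = (\<Sum>u\<in>?U. \<Sum>v\<in>?V. of_rat (p u) * of_rat (q v) * weval A (u @ v) a c)"
    by (simp add: sum.cartesian_product of_rat_mult case_prod_beta)
  also have "\<dots> = (\<Sum>u\<in>?U. \<Sum>v\<in>?V. \<Sum>b\<in>UNIV. of_rat (p u) * weval A u a b * (of_rat (q v) * weval A v b c))"
    by (simp add: weval_append mmult_def sum_distrib_left mult_ac)
  also have "\<dots> = (\<Sum>u\<in>?U. \<Sum>b\<in>UNIV. \<Sum>v\<in>?V. of_rat (p u) * weval A u a b * (of_rat (q v) * weval A v b c))"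
    by (simp add: sum.swap[of _ ?V])
  also have "\<dots> = (\<Sum>b\<in>UNIV. \<Sum>u\<in>?U. \<Sum>v\<in>?V. of_rat (p u) * weval A u a b * (of_rat (q v) * weval A v b c))"
    by (rule sum.swap)
  also have "\<dots> = mmult (feval A p) (feval A q) a c"
    by (simp add: mmult_def feval_def sum_product)
  finally show "feval A (fa_mult p q) a c = mmult (feval A p) (feval A q) a c" .
qed

lemma feval_star: "finite (supp p) \<Longrightarrow> feval A (fa_star p) = mtrans (feval A p)"
proof (intro ext)
  fix a c assume f: "finite (supp p)"
  have "feval A (fa_star p) a c = (\<Sum>w\<in>wstar ` supp p. of_rat (p (wstar w)) * weval A w a c)"
    by (simp add: feval_def supp_star fa_star_apply)
  also have "\<dots> = (\<Sum>w\<in>supp p. of_rat (p w) * weval A (wstar w) a c)"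
    by (subst sum.reindex) (auto intro: inj_onI simp: inj_on_def, metis wstar_wstar)
  also have "\<dots> = mtrans (feval A p) a c"
    by (simp add: weval_wstar mtrans_def feval_def)
  finally show "feval A (fa_star p) a c = mtrans (feval A p) a c" .
qed

lemma feval_add: "finite (supp p) \<Longrightarrow> finite (supp q) \<Longrightarrow>
   feval A (fa_add p q) a c = feval A p a c + feval A q a c"
proof -
  assume f: "finite (supp p)" "finite (supp q)"
  let ?T = "supp p \<union> supp q"
  have "feval A (fa_add p q) a c = (\<Sum>w\<in>?T. of_rat (fa_add p q w) * weval A w a c)"
    using feval_eq[of ?T "fa_add p q"] supp_add[of p q] f by blast
  also have "\<dots> = (\<Sum>w\<in>?T. of_rat (p w) * weval A w a c) + (\<Sum>w\<in>?T. of_rat (q w) * weval A w a c)"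
    by (simp add: fa_add_def of_rat_add distrib_right sum.distrib)
  also have "\<dots> = feval A p a c + feval A q a c"
    using feval_eq[of ?T p] feval_eq[of ?T q] f by simp
  finally show ?thesis .
qed

lemma feval_smult: "feval A (fa_smult r p) a c = of_rat r * feval A p a c"
proof (cases "r = 0")
  case True then show ?thesis by (simp add: feval_def fa_smult_def supp_def)
next
  case False
  then have "supp (fa_smult r p) = supp p" by (auto simp: supp_def fa_smult_def)
  then show ?thesis by (simp add: feval_def fa_smult_def of_rat_mult sum_distrib_left mult.assoc)
qed

lemma feval_zero[simp]: "feval A fa_zero = mzero"
  by (simp add: feval_def mzero_def fun_eq_iff)

lemma feval_one[simp]: "feval A fa_one = mone"
  by (simp add: fa_one_mon)


definition gr :: "'g::group_add \<Rightarrow> 'g cmat \<Rightarrow> bool" where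
  "gr g M \<longleftrightarrow> (\<forall>a c. c \<noteq> a + g \<longrightarrow> M a c = 0)"

lemma diagP: "mmult (mdiag d) (Pmat g) = (\<lambda>a c. if c = a + g then d a else (0::complex))"
proof (intro ext)
  fix a c
  have "mmult (mdiag d) (Pmat g) a c = (\<Sum>b\<in>UNIV. if b = a then (if c = a + g then d a else 0) else 0)"
    unfolding mmult_def mdiag_def Pmat_def by (rule sum.cong) auto
  then show "mmult (mdiag d) (Pmat g) a c = (if c = a + g then d a else 0)" by simp
qed

lemma graded_iff: "M \<in> graded_comp g \<longleftrightarrow> gr g M"
proof
  assume "M \<in> graded_comp g"
  then show "gr g M" by (auto simp: graded_comp_def gr_def diagP)
next
  assume g: "gr g M"
  have "M = mmult (mdiag (\<lambda>a. M a (a + g))) (Pmat g)"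
    using g by (auto simp: diagP gr_def fun_eq_iff)
  then show "M \<in> graded_comp g" by (auto simp: graded_comp_def)
qed

lemma gr_mmult: "gr g M \<Longrightarrow> gr h N \<Longrightarrow> gr (g + h) (mmult M N)"
  unfolding gr_def mmult_def
proof (intro allI impI)
  fix a c assume M: "\<forall>a c. c \<noteq> a + g \<longrightarrow> M a c = 0" and N: "\<forall>a c. c \<noteq> a + h \<longrightarrow> N a c = 0"
    and ne: "c \<noteq> a + (g + h)"
  show "(\<Sum>b\<in>UNIV. M a b * N b c) = 0"
  proof (rule sum.neutral, rule ballI)
    fix b
    show "M a b * N b c = 0"
    proof (cases "b = a + g")
      case True then have "c \<noteq> b + h" using ne by (simp add: add.assoc)
      then show ?thesis using N by simp
    next
      case False then show ?thesis using M by simp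
    qed
  qed
qed

lemma gr_mone: "gr 0 mone" by (simp add: gr_def mone_def)

lemma gr_mtrans: "gr g M \<Longrightarrow> gr (- g) (mtrans M)"
  unfolding gr_def mtrans_def
  by (metis add.assoc add.right_inverse add.right_neutral)

lemma gr_meval: "(\<And>i g. gr g (A i g)) \<Longrightarrow> gr (ldeg l) (meval A l)"
  by (cases l) (auto simp: gr_mtrans)

lemma gr_weval: "(\<And>i g. gr g (A i g)) \<Longrightarrow> gr (wdeg w) (weval A w)"
  by (induction w) (auto simp: gr_mone gr_mmult gr_meval)

lemma gr_feval:
  assumes A: "\<And>i g. gr g (A i g)" and h: "homogeneous g p"
  shows "gr g (feval A p)"
  unfolding gr_def
proof (intro allI impI)
  fix a c assume ne: "c \<noteq> a + g"
  show "feval A p a c = 0"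
    unfolding feval_def
  proof (rule sum.neutral, rule ballI)
    fix w assume w: "w \<in> supp p"
    then have "wdeg w = g" using h by (auto simp: homogeneous_def)
    then show "of_rat (p w) * weval A w a c = 0" using gr_weval[OF A, of w] ne by (simp add: gr_def)
  qed
qed

lemma gr0_commute: fixes M N :: "('g::{group_add,finite}) cmat"
  shows "gr 0 M \<Longrightarrow> gr 0 N \<Longrightarrow> mmult M N = mmult N M"
proof (intro ext)
  fix a c assume M: "gr 0 M" and N: "gr 0 N"
  have "\<And>P Q :: 'g cmat. gr 0 P \<Longrightarrow> gr 0 Q \<Longrightarrow> mmult P Q a c = (if c = a then P a a * Q a a else 0)"
  proof -
    fix P Q :: "'g cmat" assume P: "gr 0 P" and Q: "gr 0 Q"
    have "mmult P Q a c = (\<Sum>b\<in>UNIV. if b = a then P a a * Q a c else 0)"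
      unfolding mmult_def by (rule sum.cong) (use P in \<open>auto simp: gr_def\<close>)
    also have "\<dots> = P a a * Q a c" by simp
    also have "\<dots> = (if c = a then P a a * Q a a else 0)" using Q by (auto simp: gr_def)
    finally show "mmult P Q a c = (if c = a then P a a * Q a a else 0)" .
  qed
  from this[OF M N] this[OF N M] show "mmult M N a c = mmult N M a c" by (simp add: mult.commute)
qed

lemma gr0_trans: "gr 0 M \<Longrightarrow> mtrans M = M"
  by (auto simp: gr_def mtrans_def fun_eq_iff) (metis)

lemma fa_diff_alt: "fa_diff p q = fa_add p (fa_smult (-1) q)"
  by (simp add: fa_diff_def fa_add_def fa_smult_def fun_eq_iff)

lemma feval_diff: "finite (supp p) \<Longrightarrow> finite (supp q) \<Longrightarrow>
   feval A (fa_diff p q) a c = feval A p a c - feval A q a c"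
  unfolding fa_diff_alt
  by (subst feval_add) (auto simp: feval_smult intro: finite_subset[OF supp_smult])

lemma wimg_feval:
  fixes A :: "nat \<Rightarrow> 'g \<Rightarrow> ('g::{group_add,finite}) cmat"
  assumes h: "\<And>i g. 1 \<le> i \<Longrightarrow> h i g \<in> FA"
  defines "B \<equiv> (\<lambda>i g. if 1 \<le> i then feval A (h i g) else A i g)"
  shows "ok w \<Longrightarrow> feval A (wimg h w) = weval B w"
proof (induction w)
  case Nil then show ?case by simp
next
  case (Cons l w)
  have hok: "hok h" using h by (simp add: hok_def)
  have l: "1 \<le> idx l" and w: "ok w" using Cons.prems by auto
  have "feval A (limg h l) = meval B l"
    using l h by (cases l) (auto simp: B_def feval_star FA_iff)
  moreover have "finite (supp (limg h l))" using limg_FA[OF hok l] by (simp add: FA_iff)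
  moreover have "finite (supp (wimg h w))" using wimg_FA[OF hok w] by (simp add: FA_iff)
  ultimately show ?case using Cons.IH[OF w] by (simp add: feval_mult)
qed

lemma star_identities_ideal: "tstar_ideal (star_identities :: ('g::{group_add,finite}) fa set)"
  unfolding tstar_ideal_def
proof (intro conjI ballI allI impI)
  show "star_identities \<subseteq> FA" by (auto simp: star_identities_def)
  show "fa_zero \<in> star_identities" by (simp add: star_identities_def FA_zero)
next
  fix a b :: "'g fa" assume a: "a \<in> star_identities" and b: "b \<in> star_identities"
  have "a \<in> FA" "b \<in> FA" using a b by (auto simp: star_identities_def)
  then have "fa_add a b \<in> FA" "finite (supp a)" "finite (supp b)" using FA_add by (auto simp: FA_iff)
  then show "fa_add a b \<in> star_identities"
    using a b by (auto simp: star_identities_def feval_add fun_eq_iff mzero_def)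
next
  fix a :: "'g fa" and c assume a: "a \<in> star_identities"
  then show "fa_smult c a \<in> star_identities"
    by (auto simp: star_identities_def FA_smult feval_smult fun_eq_iff mzero_def)
next
  fix a p :: "'g fa" assume a: "a \<in> star_identities" and p: "p \<in> FA"
  have aF: "a \<in> FA" using a by (auto simp: star_identities_def)
  then have "fa_mult p a \<in> FA" "finite (supp a)" "finite (supp p)"
    using FA_mult p by (auto simp: FA_iff)
  then show "fa_mult p a \<in> star_identities"
    using a by (auto simp: star_identities_def feval_mult fun_eq_iff mzero_def mmult_def)
next
  fix a p :: "'g fa" assume a: "a \<in> star_identities" and p: "p \<in> FA"
  have aF: "a \<in> FA" using a by (auto simp: star_identities_def)
  then have "fa_mult a p \<in> FA" "finite (supp a)" "finite (supp p)"
    using FA_mult p by (auto simp: FA_iff)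
  then show "fa_mult a p \<in> star_identities"
    using a by (auto simp: star_identities_def feval_mult fun_eq_iff mzero_def mmult_def)
next
next
  fix a :: "'g fa" assume a: "a \<in> star_identities"
  have aF: "a \<in> FA" using a by (auto simp: star_identities_def)
  then have "fa_star a \<in> FA" "finite (supp a)" using FA_star by (auto simp: FA_iff)
  then show "fa_star a \<in> star_identities"
    using a by (auto simp: star_identities_def feval_star)
next
  fix h :: "nat \<Rightarrow> 'g \<Rightarrow> 'g fa" and a :: "'g fa"
  assume h: "\<forall>i g. 1 \<le> i \<longrightarrow> h i g \<in> FA \<and> homogeneous g (h i g)" and a: "a \<in> star_identities"
  have hok: "hok h" using h by (simp add: hok_def)
  have aFA: "a \<in> FA" using a by (simp add: star_identities_def)
  show "subst h a \<in> star_identities"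
    unfolding star_identities_def
  proof (intro CollectI conjI allI impI subst_FA[OF hok aFA])
    fix A :: "nat \<Rightarrow> 'g \<Rightarrow> 'g cmat" assume A: "\<forall>i g. A i g \<in> graded_comp g"
    define B where "B = (\<lambda>i g. if 1 \<le> i then feval A (h i g) else A i g)"
    have Agr: "\<And>i g. gr g (A i g)" using A graded_iff by blast
    have "\<And>i g. gr g (B i g)" using h Agr by (auto simp: B_def intro: gr_feval)
    then have Bg: "\<forall>i g. B i g \<in> graded_comp g" using graded_iff by blast
    have fa: "finite (supp a)" and oka: "\<And>w. w \<in> supp a \<Longrightarrow> ok w" using aFA by (auto simp: FA_iff)
    show "feval A (subst h a) = mzero"
    proof (intro ext)
      fix x y
      have "feval A (subst h a) x y = (\<Sum>w\<in>supp a. of_rat (a w) * feval A (wimg h w) x y)"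
        unfolding subst_def
        by (rule feval_sum[OF fa]) (use wimg_FA[OF hok] oka in \<open>auto simp: FA_iff\<close>)
      also have "\<dots> = (\<Sum>w\<in>supp a. of_rat (a w) * weval B w x y)"
        by (rule sum.cong[OF refl]) (use wimg_feval[of h] h oka in \<open>auto simp: B_def\<close>)
      also have "\<dots> = feval B a x y" by (simp add: feval_def)
      also have "\<dots> = 0" using a Bg by (simp add: star_identities_def mzero_def)
      finally show "feval A (subst h a) x y = mzero x y" by (simp add: mzero_def)
    qed
  qed
qed

lemma gens_in: "star_gens \<subseteq> (star_identities :: ('g::{group_add,finite}) fa set)"
proof
  fix f :: "'g fa" assume "f \<in> star_gens"
  then consider i j where "1 \<le> i" "1 \<le> j"
      "f = fa_diff (mon [X i 0, X j 0]) (mon [X j 0, X i 0])"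
    | i where "1 \<le> i" "f = fa_diff (mon [X i 0]) (mon [Xs i 0])"
    unfolding star_gens_def by (auto simp: fa_var_mon fa_mult_mon)
  then show "f \<in> star_identities"
  proof cases
    case 1
    show ?thesis unfolding star_identities_def
    proof (intro CollectI conjI allI impI)
      show "f \<in> FA" using 1 by (auto intro!: FA_diff mon_FA)
      fix A :: "nat \<Rightarrow> 'g \<Rightarrow> 'g cmat" assume A: "\<forall>i g. A i g \<in> graded_comp g"
      have g: "gr 0 (A i 0)" "gr 0 (A j 0)" using A graded_iff by blast+
      show "feval A f = mzero"
      proof (intro ext)
        fix x y
        show "feval A f x y = mzero x y"
          unfolding 1(3) using gr0_commute[OF g] by (simp add: feval_diff mzero_def)
      qed
    qed
  next
    case 2
    show ?thesis unfolding star_identities_def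
    proof (intro CollectI conjI allI impI)
      show "f \<in> FA" using 2 by (auto intro!: FA_diff mon_FA)
      fix A :: "nat \<Rightarrow> 'g \<Rightarrow> 'g cmat" assume A: "\<forall>i g. A i g \<in> graded_comp g"
      have g: "gr 0 (A i 0)" using A graded_iff by blast
      show "feval A f = mzero"
      proof (intro ext)
        fix x y
        show "feval A f x y = mzero x y"
          unfolding 2(2) using gr0_trans[OF g] by (simp add: feval_diff mzero_def)
      qed
    qed
  qed
qed

lemma easy: "tstar_gen star_gens \<subseteq> (star_identities :: ('g::{group_add,finite}) fa set)"
  unfolding tstar_gen_def using star_identities_ideal gens_in by blast


lemma fa_mult_diff_left: "fa_mult (fa_diff p q) r = fa_diff (fa_mult p r) (fa_mult q r)"
  by (simp add: fa_mult_def fa_diff_def fun_eq_iff sum_subtractf left_diff_distrib)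
lemma fa_mult_diff_right: "fa_mult r (fa_diff p q) = fa_diff (fa_mult r p) (fa_mult r q)"
  by (simp add: fa_mult_def fa_diff_def fun_eq_iff sum_subtractf right_diff_distrib)

lemma fa_star_mon: "fa_star (mon b) = mon (wstar b)"
  by (auto simp: fun_eq_iff fa_star_apply mon_def)

lemma fa_mult_one_right: "fa_mult (mon b) fa_one = mon b"
  by (simp add: fa_one_mon fa_mult_mon)

lemma supp_diff_mon: "u \<noteq> v \<Longrightarrow> supp (fa_diff (mon u) (mon v)) = {u, v}"
  by (auto simp: supp_def fa_diff_def mon_def)

lemma subst_diff_mon:
  assumes "u \<noteq> v"
  shows "subst h (fa_diff (mon u) (mon v)) = fa_diff (wimg h u) (wimg h v)"
  unfolding subst_def supp_diff_mon[OF assms] using assms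
  by (simp add: fa_diff_def mon_def fun_eq_iff)

context
  fixes J :: "('g::group_add) fa set"
  assumes J: "tstar_ideal J" and G: "star_gens \<subseteq> J"
begin

definition relJ :: "'g letter list \<Rightarrow> 'g letter list \<Rightarrow> bool" where
  "relJ u v \<longleftrightarrow> ok u \<and> ok v \<and> fa_diff (mon u) (mon v) \<in> J"

lemma J_zero: "fa_zero \<in> J" using J by (simp add: tstar_ideal_def)
lemma J_add: "a \<in> J \<Longrightarrow> b \<in> J \<Longrightarrow> fa_add a b \<in> J" using J by (simp add: tstar_ideal_def)
lemma J_smult: "a \<in> J \<Longrightarrow> fa_smult c a \<in> J" using J by (simp add: tstar_ideal_def)
lemma J_multl: "a \<in> J \<Longrightarrow> p \<in> FA \<Longrightarrow> fa_mult p a \<in> J" using J by (simp add: tstar_ideal_def)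
lemma J_multr: "a \<in> J \<Longrightarrow> p \<in> FA \<Longrightarrow> fa_mult a p \<in> J" using J by (simp add: tstar_ideal_def)
lemma J_subst: "(\<forall>i g. 1 \<le> i \<longrightarrow> h i g \<in> FA \<and> homogeneous g (h i g)) \<Longrightarrow> a \<in> J \<Longrightarrow> subst h a \<in> J"
  using J unfolding tstar_ideal_def by blast

lemma J_sum: "finite K \<Longrightarrow> (\<And>j. j \<in> K \<Longrightarrow> f j \<in> J) \<Longrightarrow> (\<lambda>x. \<Sum>j\<in>K. c j * f j x) \<in> J"
proof (induction K rule: finite_induct)
  case empty then show ?case using J_zero by (simp add: fa_zero_def)
next
  case (insert j K)
  have "fa_add (fa_smult (c j) (f j)) (\<lambda>x. \<Sum>j\<in>K. c j * f j x) \<in> J"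
    using insert by (intro J_add J_smult) auto
  then show ?case using insert by (simp add: fa_add_def fa_smult_def)
qed

definition hh :: "'g letter list \<Rightarrow> 'g letter list \<Rightarrow> nat \<Rightarrow> 'g \<Rightarrow> 'g fa" where
  "hh b c = (\<lambda>i g. if i = 1 \<and> g = 0 then mon b else if i = 2 \<and> g = 0 then mon c else fa_zero)"

lemma hh_ok: "ok b \<Longrightarrow> ok c \<Longrightarrow> wdeg b = 0 \<Longrightarrow> wdeg c = 0 \<Longrightarrow>
   \<forall>i g. 1 \<le> i \<longrightarrow> hh b c i g \<in> FA \<and> homogeneous g (hh b c i g)"
  by (auto simp: hh_def mon_FA FA_zero homogeneous_def)

interpretation W: walkrel relJ
proof
  fix u :: "'g letter list" assume "ok u"
  then show "relJ u u" using J_zero by (simp add: relJ_def fa_diff_def fa_zero_def)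
next
  fix u v :: "'g letter list" assume "relJ u v"
  then show "relJ v u"
    using J_smult[of "fa_diff (mon u) (mon v)" "-1"]
    by (simp add: relJ_def fa_diff_def fa_smult_def)
next
  fix u v w :: "'g letter list" assume "relJ u v" "relJ v w"
  then show "relJ u w"
    using J_add[of "fa_diff (mon u) (mon v)" "fa_diff (mon v) (mon w)"]
    by (simp add: relJ_def fa_diff_def fa_add_def)
next
  fix u v x y :: "'g letter list" assume r: "relJ u v" and x: "ok x" and y: "ok y"
  have "fa_mult (mon x) (fa_mult (fa_diff (mon u) (mon v)) (mon y)) \<in> J"
    using r x y by (intro J_multl J_multr) (auto simp: relJ_def mon_FA)
  then show "relJ (x@u@y) (x@v@y)"
    using r x y by (simp add: relJ_def fa_mult_diff_left fa_mult_diff_right fa_mult_mon)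
next
  fix b c :: "'g letter list" assume b: "ok b" and c: "ok c" and wb: "wdeg b = 0" and wc: "wdeg c = 0"
  define g where "g = fa_diff (mon [X 1 (0::'g), X 2 0]) (mon [X 2 0, X 1 0])"
  have "g \<in> star_gens" unfolding star_gens_def g_def
    by (rule UnI1, rule CollectI, rule exI[of _ 1], rule exI[of _ 2]) (simp add: fa_var_mon fa_mult_mon)
  then have "subst (hh b c) g \<in> J" using G J_subst[OF hh_ok[OF b c wb wc]] by blast
  moreover have "subst (hh b c) g = fa_diff (mon (b@c)) (mon (c@b))"
    unfolding g_def by (subst subst_diff_mon) (auto simp: hh_def fa_mult_one_right fa_one_mon fa_mult_mon)
  ultimately show "relJ (b@c) (c@b)" using b c by (simp add: relJ_def)
next
  fix b :: "'g letter list" assume b: "ok b" and wb: "wdeg b = 0"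
  define g where "g = fa_diff (mon [X 1 (0::'g)]) (mon [Xs 1 0])"
  have "g \<in> star_gens" unfolding star_gens_def g_def
    by (rule UnI2, rule CollectI, rule exI[of _ 1]) (simp add: fa_var_mon)
  then have "subst (hh b b) g \<in> J" using G J_subst[OF hh_ok[OF b b wb wb]] by blast
  moreover have "subst (hh b b) g = fa_diff (mon b) (mon (wstar b))"
    unfolding g_def by (subst subst_diff_mon) (auto simp: hh_def fa_one_mon fa_mult_mon fa_star_mon)
  ultimately show "relJ b (wstar b)" using b by (simp add: relJ_def)
qed

lemma same_key: "ok u \<Longrightarrow> ok v \<Longrightarrow> em 0 u = em 0 v \<Longrightarrow> wdeg u = wdeg v \<Longrightarrow>
   fa_diff (mon u) (mon v) \<in> J"
  using W.K[of u v 0] by (simp add: relJ_def)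

end


lemma weval_gen:
  fixes dd :: "nat \<times> ('g::{group_add,finite}) \<times> 'g \<Rightarrow> complex"
  assumes A: "\<And>i h. A i h = (\<lambda>a c. if c = a + h then dd (i,h,a) else 0)"
  shows "weval A w a c = (if c = a + wdeg w then prod_mset (image_mset dd (em a w)) else 0)"
proof (induction w arbitrary: a)
  case Nil then show ?case by (simp add: mone_def eq_commute)
next
  case (Cons l w)
  show ?case
  proof (cases l)
    case (X i h)
    have "weval A (l#w) a c = (\<Sum>b\<in>UNIV. if b = a + h then dd (i,h,a) * weval A w b c else 0)"
      unfolding weval_Cons mmult_def using X A by (intro sum.cong) auto
    also have "\<dots> = dd (i,h,a) * weval A w (a + h) c" by simp
    finally show ?thesis using Cons.IH[of "a + h"] X by (simp add: add.assoc)
  next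
    case (Xs i h)
    have "weval A (l#w) a c = (\<Sum>b\<in>UNIV. if b = a - h then dd (i,h,a - h) * weval A w b c else 0)"
      unfolding weval_Cons mmult_def using Xs A by (intro sum.cong) (auto simp: mtrans_def eq_diff_eq)
    also have "\<dots> = dd (i,h,a - h) * weval A w (a - h) c" by simp
    finally show ?thesis using Cons.IH[of "a - h"] Xs by (simp add: add.assoc diff_conv_add_uminus del: add_uminus_conv_diff)
  qed
qed

lemma vandermonde:
  fixes c :: "complex \<Rightarrow> complex"
  assumes V: "finite V" and S: "\<And>t. (\<Sum>m\<in>V. c m * m ^ t) = 0" and n: "n \<in> V"
  shows "c n = 0"
proof -
  define q where "q = (\<Prod>m\<in>V - {n}. [:- m, 1:])"
  have pq: "poly q x = (\<Prod>m\<in>V - {n}. x - m)" for x by (simp add: q_def poly_prod)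
  have "(\<Sum>m\<in>V. c m * poly q m) = (\<Sum>m\<in>V. \<Sum>i\<le>degree q. coeff q i * (c m * m ^ i))"
    by (simp add: poly_altdef sum_distrib_left mult_ac)
  also have "\<dots> = (\<Sum>i\<le>degree q. coeff q i * (\<Sum>m\<in>V. c m * m ^ i))"
    by (subst sum.swap) (simp add: sum_distrib_left)
  also have "\<dots> = 0" using S by simp
  finally have s0: "(\<Sum>m\<in>V. c m * poly q m) = 0" .
  have "(\<Sum>m\<in>V. c m * poly q m) = c n * poly q n"
  proof (rule sum.remove[OF V n, THEN trans])
    have "(\<Sum>m\<in>V - {n}. c m * poly q m) = 0"
    proof (rule sum.neutral, rule ballI)
      fix m assume m: "m \<in> V - {n}"
      have "poly q m = 0" unfolding pq using V m by (auto intro: prod_zero)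
      then show "c m * poly q m = 0" by simp
    qed
    then show "c n * poly q n + (\<Sum>m\<in>V - {n}. c m * poly q m) = c n * poly q n" by simp
  qed
  moreover have "poly q n \<noteq> 0" unfolding pq using V by auto
  ultimately show ?thesis using s0 by simp
qed

definition enc :: "nat \<times> ('g::finite) \<times> 'g \<Rightarrow> nat" where
  "enc x = enumerate {p. prime p} (to_nat_on (UNIV :: (nat \<times> 'g \<times> 'g) set) x)"

lemma enc_prime: "prime (enc x)"
  using enumerate_in_set[OF primes_infinite] by (simp add: enc_def)

lemma enc_inj: "inj enc"
proof -
  have c: "countable (UNIV :: (nat \<times> ('g::finite) \<times> 'g) set)"
  proof -
    have "countable (UNIV :: nat set)" by simp
    moreover have "countable (UNIV :: ('g \<times> 'g) set)" by (rule countable_finite) simp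
    ultimately have "countable ((UNIV :: nat set) \<times> (UNIV :: ('g \<times> 'g) set))" by blast
    then show ?thesis by simp
  qed
  have i1: "inj (enumerate {p::nat. prime p})" using inj_enumerate[OF primes_infinite] .
  have i2: "inj (to_nat_on (UNIV :: (nat \<times> ('g::finite) \<times> 'g) set))" using inj_on_to_nat_on[OF c] .
  show ?thesis unfolding enc_def using inj_compose[OF i1 i2] by (simp add: comp_def)
qed

definition encM :: "(nat \<times> ('g::finite) \<times> 'g) multiset \<Rightarrow> nat" where
  "encM M = prod_mset (image_mset enc M)"

lemma encM_inj: "encM M1 = encM M2 \<Longrightarrow> M1 = M2"
proof -
  assume e: "encM M1 = encM M2"
  have "prime_factorization (encM M) = image_mset enc M" for M
    unfolding encM_def by (rule prime_factorization_prod_mset_primes) (auto simp: enc_prime)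
  then have "image_mset enc M1 = image_mset enc M2" using e by metis
  then have "image_mset (inv enc) (image_mset enc M1) = image_mset (inv enc) (image_mset enc M2)" by simp
  moreover have "inv enc \<circ> enc = id" by (rule inv_o_cancel[OF enc_inj])
  ultimately show ?thesis by (metis multiset.map_comp multiset.map_id)
qed

lemma prod_mset_pow: "prod_mset (image_mset (\<lambda>x. (of_nat (f x) :: complex) ^ t) M) = of_nat (prod_mset (image_mset f M)) ^ t"
  by (induction M) (auto simp: power_mult_distrib)

lemma independence:
  fixes f :: "('g::{group_add,finite}) fa"
  assumes f: "f \<in> star_identities"
  shows "(\<Sum>w\<in>{w\<in>supp f. wdeg w = g0 \<and> em 0 w = M0}. f w) = 0"
proof -
  have fF: "f \<in> FA" using f by (simp add: star_identities_def)
  define T where "T = supp f"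
  have fT: "finite T" using fF by (simp add: FA_iff T_def)
  define S where "S = {w\<in>T. wdeg w = g0}"
  have fS: "finite S" using fT by (simp add: S_def)
  define N where "N = (\<lambda>w::'g letter list. encM (em 0 w))"
  define V where "V = (\<lambda>w. complex_of_nat (N w)) ` S"
  define cc where "cc = (\<lambda>n. \<Sum>w\<in>{w\<in>S. complex_of_nat (N w) = n}. complex_of_rat (f w))"
  have sums: "(\<Sum>m\<in>V. cc m * m ^ t) = 0" for t
  proof -
    define A where "A = (\<lambda>i (h::'g). mmult (mdiag (\<lambda>a. (complex_of_nat (enc (i,h,a))) ^ t)) (Pmat h))"
    have Ag: "\<forall>i g. A i g \<in> graded_comp g" by (auto simp: A_def graded_comp_def)
    have A': "\<And>i h. A i h = (\<lambda>a c. if c = a + h then (\<lambda>x. (complex_of_nat (enc x)) ^ t) (i,h,a) else 0)"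
      by (simp add: A_def diagP)
    have "0 = feval A f 0 g0" using f Ag by (simp add: star_identities_def mzero_def)
    also have "\<dots> = (\<Sum>w\<in>T. of_rat (f w) * (if g0 = wdeg w then of_nat (N w) ^ t else 0))"
    proof -
      have pw: "(\<Prod>a\<in>#em 0 w. complex_of_nat (enc a) ^ t) = of_nat (N w) ^ t" for w
        unfolding N_def encM_def using prod_mset_pow[of enc t "em 0 w"] by simp
      have "feval A f 0 g0 = (\<Sum>w\<in>T. of_rat (f w) * (if g0 = wdeg w then (\<Prod>a\<in>#em 0 w. complex_of_nat (enc a) ^ t) else 0))"
        by (simp add: feval_def T_def weval_gen[OF A'])
      also have "\<dots> = (\<Sum>w\<in>T. of_rat (f w) * (if g0 = wdeg w then of_nat (N w) ^ t else 0))"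
        by (rule sum.cong[OF refl]) (simp only: pw)
      finally show ?thesis .
    qed
    also have "\<dots> = (\<Sum>w\<in>S. of_rat (f w) * of_nat (N w) ^ t)"
      unfolding S_def by (rule sum.mono_neutral_cong_right) (use fT in auto)
    also have "\<dots> = (\<Sum>m\<in>V. \<Sum>w\<in>{w\<in>S. complex_of_nat (N w) = m}. of_rat (f w) * of_nat (N w) ^ t)"
      unfolding V_def by (rule sum.image_gen[OF fS])
    also have "\<dots> = (\<Sum>m\<in>V. cc m * m ^ t)"
      unfolding cc_def by (auto simp: sum_distrib_right intro!: sum.cong)
    finally show ?thesis by simp
  qed
  show ?thesis
  proof (cases "\<exists>w0\<in>S. em 0 w0 = M0")
    case False
    then have "{w\<in>supp f. wdeg w = g0 \<and> em 0 w = M0} = {}" by (auto simp: S_def T_def)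
    then show ?thesis by (metis sum.empty)
  next
    case True
    then obtain w0 where w0: "w0 \<in> S" "em 0 w0 = M0" by blast
    have "cc (of_nat (N w0)) = 0"
      by (rule vandermonde[OF _ sums]) (use fS w0 in \<open>auto simp: V_def\<close>)
    moreover have "{w\<in>S. complex_of_nat (N w) = of_nat (N w0)} = {w\<in>supp f. wdeg w = g0 \<and> em 0 w = M0}"
      using w0 encM_inj by (auto simp: S_def T_def N_def)
    ultimately have "of_rat (\<Sum>w\<in>{w\<in>supp f. wdeg w = g0 \<and> em 0 w = M0}. f w) = (0::complex)"
      by (simp add: cc_def of_rat_sum)
    then show ?thesis by simp
  qed
qed


lemma hard:
  fixes f :: "('g::{group_add,finite}) fa"
  assumes f: "f \<in> star_identities" and J: "tstar_ideal J" and G: "star_gens \<subseteq> J"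
  shows "f \<in> J"
proof -
  have fF: "f \<in> FA" using f by (simp add: star_identities_def)
  define T where "T = supp f"
  have fT: "finite T" and okT: "\<And>w. w \<in> T \<Longrightarrow> ok w" using fF by (auto simp: FA_iff T_def)
  define key where "key = (\<lambda>w::'g letter list. (wdeg w, em 0 w))"
  define rep where "rep = (\<lambda>w. SOME r. r \<in> T \<and> key r = key w)"
  have rep: "rep w \<in> T \<and> key (rep w) = key w" if "w \<in> T" for w
    unfolding rep_def by (rule someI[of _ w]) (use that in auto)
  define D where "D = (\<lambda>x. \<Sum>w\<in>T. f w * fa_diff (mon w) (mon (rep w)) x)"
  have DJ: "D \<in> J" unfolding D_def
  proof (rule J_sum[OF J G fT])
    fix w assume w: "w \<in> T"
    show "fa_diff (mon w) (mon (rep w)) \<in> J"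
      using same_key[OF J G] okT[OF w] okT rep[OF w] by (auto simp: key_def)
  qed
  have "f = D"
  proof
    fix x
    have z: "(\<Sum>w\<in>T. f w * mon (rep w) x) = 0"
    proof -
      have "(\<Sum>w\<in>T. f w * mon (rep w) x) = (\<Sum>w\<in>{w\<in>T. rep w = x}. f w)"
        using fT by (simp add: sum.inter_filter mon_def if_distrib eq_commute cong: if_cong)
      also have "\<dots> = 0"
      proof (cases "\<exists>w0\<in>T. rep w0 = x")
        case True
        then obtain w0 where w0: "w0 \<in> T" "rep w0 = x" by blast
        have "{w\<in>T. rep w = x} = {w\<in>supp f. wdeg w = wdeg w0 \<and> em 0 w = em 0 w0}"
        proof (intro set_eqI iffI)
          fix w assume "w \<in> {w\<in>T. rep w = x}"
          then have "w \<in> T" "rep w = rep w0" using w0 by auto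
          then have "key w = key w0" using rep[of w] rep[OF w0(1)] by metis
          then show "w \<in> {w\<in>supp f. wdeg w = wdeg w0 \<and> em 0 w = em 0 w0}"
            using \<open>w \<in> T\<close> by (simp add: key_def T_def)
        next
          fix w assume "w \<in> {w\<in>supp f. wdeg w = wdeg w0 \<and> em 0 w = em 0 w0}"
          then have "w \<in> T" "key w = key w0" by (auto simp: key_def T_def)
          then show "w \<in> {w\<in>T. rep w = x}" using w0 by (simp add: rep_def)
        qed
        then show ?thesis using independence[OF f] by simp
      next
        case False
        then have "{w\<in>T. rep w = x} = {}" by auto
        then show ?thesis by (metis sum.empty)
      qed
      finally show ?thesis .
    qed
    have "f x = (\<Sum>w\<in>T. f w * mon w x)"
      using rep_sum[OF fT, of f] by (simp add: T_def) metis
    also have "\<dots> = (\<Sum>w\<in>T. f w * mon w x) - (\<Sum>w\<in>T. f w * mon (rep w) x)" using z by simp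
    also have "\<dots> = D x"
      by (simp add: D_def fa_diff_def right_diff_distrib sum_subtractf)
    finally show "f x = D x" .
  qed
  then show ?thesis using DJ by simp
qed

theorem mainTheorem7:
  shows "(star_identities :: ('g::{group_add,finite}) fa set) = tstar_gen star_gens"
proof
  show "star_identities \<subseteq> tstar_gen star_gens"
    unfolding tstar_gen_def using hard by blast
  show "tstar_gen star_gens \<subseteq> star_identities" using easy .
qed


end
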